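(* Let $H_n=\sum_{j=1}^n\frac1j$, let $\gamma$ be the Euler–Mascheroni constant, $\Gamma$ the gamma function, and for real $z$ and positive integer $k$ let $z^{\overline{k}} = z(z+1) \cdots (z + k -1)$ be the rising factorial (Pochhammer symbol). For $k \in \{1, 2, 3, \ldots \}$ and $x > 0$, $$\sum_{n=1}^\infty (-1)^n \left(H_n -\log\sqrt[k]{(n+ x - 1)^{\overline{k}}} - \gamma \right) = \frac{\gamma}{2} + \frac{1}{k}\log\left[\frac{\Gamma\left(\frac{x+k}{2}\right)}{ \Gamma\left(\frac{x}{2} \right)}\right].$$ *)

theory Defs
  imports "HOL-Analysis.Analysis"
begin

end

theory Submission
  imports Defs
begin

lemma ln_shift_lim:
  fixes c :: real
  shows "(\<lambda>n. ln (real n + c) - ln (real n)) \<longlonglongrightarrow> 0"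
proof -
  have lim: "(\<lambda>n. ln (1 + c * inverse (real n))) \<longlonglongrightarrow> ln (1 + c * 0)"
    by (intro tendsto_intros) (simp_all add: lim_inverse_n)
  have ev: "eventually (\<lambda>n. ln (1 + c * inverse (real n)) = ln (real n + c) - ln (real n)) sequentially"
  proof -
    obtain M :: nat where M: "real M > \<bar>c\<bar>" using reals_Archimedean2 by blast
    show ?thesis unfolding eventually_sequentially
    proof (intro exI[of _ "Suc M"] allI impI)
      fix n assume "Suc M \<le> n"
      then have n: "real n > \<bar>c\<bar>" "real n > 0" using M by linarith+
      then have "real n + c > 0" by linarith
      moreover have "1 + c * inverse (real n) = (real n + c) / real n" using n by (simp add: field_simps)
      ultimately show "ln (1 + c * inverse (real n)) = ln (real n + c) - ln (real n)"
        using n by (simp add: ln_div)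
    qed
  qed
  show ?thesis using Lim_transform_eventually[OF lim ev] by simp
qed

lemma ln_poch_GS:
  fixes z :: real
  assumes "z > 0" "N \<ge> 1"
  shows "ln (pochhammer z (N+1)) = ln (fact N) + z * ln (real N) - ln (Gamma_series z N)"
proof -
  have p: "pochhammer z (N+1) > 0" using assms by (simp add: pochhammer_pos)
  have "ln (Gamma_series z N) = ln (fact N) + z * ln (real N) - ln (pochhammer z (N+1))"
    unfolding Gamma_series_def using p by (simp add: ln_div ln_mult)
  then show ?thesis by simp
qed

lemma my_sequentially_even_odd:
  assumes E: "eventually (\<lambda>n. P (2 * n)) sequentially" and O: "eventually (\<lambda>n. P (2 * n + 1)) sequentially"
  shows "eventually P sequentially"
proof -
  from E obtain n_e where [intro]: "\<And>n. n \<ge> n_e \<Longrightarrow> P (2 * n)"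
    by (auto simp: eventually_sequentially)
  moreover
  from O obtain n_o where [intro]: "\<And>n. n \<ge> n_o \<Longrightarrow> P (Suc (2 * n))"
    by (auto simp: eventually_sequentially)
  show ?thesis
    unfolding eventually_sequentially
  proof (intro exI allI impI)
    fix n assume "max (2 * n_e) (2 * n_o + 1) \<le> n" then show "P n"
      by (cases "even n") (auto elim!: evenE oddE )
  qed
qed

lemma my_limseq_even_odd:
  assumes "(\<lambda>n. f (2 * n)) \<longlonglongrightarrow> (l :: 'a :: topological_space)"
      and "(\<lambda>n. f (2 * n + 1)) \<longlonglongrightarrow> l"
  shows "f \<longlonglongrightarrow> l"
  using assms by (auto simp: filterlim_iff intro: my_sequentially_even_odd)

theorem mainTheorem10:
  fixes k :: nat and x :: real
  assumes "k \<ge> 1" and "x > 0"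
  shows "(\<lambda>m. let n = m + 1 in
            (-1) ^ n * (harm n - ln (root k (pochhammer (real n + x - 1) k)) - euler_mascheroni))
         sums (euler_mascheroni / 2 + (1 / real k) * ln (Gamma ((x + real k) / 2) / Gamma (x / 2)))"
proof -
  define A where "A n = harm n - (\<Sum>i<k. ln (real n + x - 1 + real i)) / real k - euler_mascheroni" for n :: nat
  define f where "f m = (-1) ^ (m+1) * A (m+1)" for m :: nat
  define b where "b i = (x + real i) / 2" for i :: nat
  define S where "S M = (\<Sum>m<M. f m)" for M
  have kpos: "real k > 0" using assms by simp
  have bpos: "b i > 0" for i using assms by (simp add: b_def)
  have feq: "(\<lambda>m. let n = m + 1 in
            (-1) ^ n * (harm n - ln (root k (pochhammer (real n + x - 1) k)) - euler_mascheroni)) = f"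
  proof
    fix m :: nat
    have y: "real (m+1) + x - 1 + real i > 0" for i using assms by simp
    have "pochhammer (real (m+1) + x - 1) k = (\<Prod>i<k. real (m+1) + x - 1 + real i)"
      by (simp add: pochhammer_prod atLeast0LessThan)
    then have "ln (root k (pochhammer (real (m+1) + x - 1) k)) = (\<Sum>i<k. ln (real (m+1) + x - 1 + real i)) / real k"
      using assms y by (simp add: ln_root ln_prod less_le_not_le)
    then show "(let n = m + 1 in
            (-1) ^ n * (harm n - ln (root k (pochhammer (real n + x - 1) k)) - euler_mascheroni)) = f m"
      by (simp add: f_def A_def Let_def)
  qed
  have key: "S (2*M) = harm M / 2 - (\<Sum>i<k. ln (pochhammer (b (i+1)) M) - ln (pochhammer (b i) M)) / real k" for M
  proof (induction M)
    case 0
    then show ?case by (simp add: S_def harm_def)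
  next
    case (Suc M)
    have "S (2 * Suc M) = S (2*M) + (f (2*M) + f (2*M+1))" by (simp add: S_def)
    also have "f (2*M) + f (2*M+1) = A (2*M+2) - A (2*M+1)" by (simp add: f_def)
    also have "\<dots> = 1 / (2 * real M + 2) - (\<Sum>i<k. ln (real (2*M+2) + x - 1 + real i) - ln (real (2*M+1) + x - 1 + real i)) / real k"
    proof -
      have "harm (2*M+2) = harm (2*M+1) + 1 / (2 * real M + 2 :: real)"
        using harm_Suc[of "2*M+1", where ?'a=real] by (simp add: field_simps)
      then show ?thesis by (simp add: A_def sum_subtractf diff_divide_distrib)
    qed
    also have "(\<Sum>i<k. ln (real (2*M+2) + x - 1 + real i) - ln (real (2*M+1) + x - 1 + real i))
       = (\<Sum>i<k. ln (b (i+1) + real M) - ln (b i + real M))"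
    proof (rule sum.cong)
      fix i assume "i \<in> {..<k}"
      have e1: "real (2*M+2) + x - 1 + real i = 2 * (b (i+1) + real M)" by (simp add: b_def field_simps)
      have e2: "real (2*M+1) + x - 1 + real i = 2 * (b i + real M)" by (simp add: b_def field_simps)
      have "b (i+1) + real M > 0" "b i + real M > 0" using bpos[of i] bpos[of "i+1"] by simp_all
      then show "ln (real (2*M+2) + x - 1 + real i) - ln (real (2*M+1) + x - 1 + real i)
         = ln (b (i+1) + real M) - ln (b i + real M)" unfolding e1 e2 by (simp only: ln_mult[of 2]) simp
    qed simp
    also have "(\<Sum>i<k. ln (b (i+1) + real M) - ln (b i + real M)) =
       (\<Sum>i<k. ln (pochhammer (b (i+1)) (Suc M)) - ln (pochhammer (b i) (Suc M))) -
       (\<Sum>i<k. ln (pochhammer (b (i+1)) M) - ln (pochhammer (b i) M))"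
    proof -
      have "ln (pochhammer (b j) (Suc M)) = ln (pochhammer (b j) M) + ln (b j + real M)" for j
      proof -
        have "pochhammer (b j) M > 0" "b j + real M > 0" using bpos[of j] by (simp_all add: pochhammer_pos)
        then show ?thesis by (simp add: pochhammer_Suc ln_mult)
      qed
      then show ?thesis by (simp add: sum_subtractf[symmetric] algebra_simps)
    qed
    finally have c: "S (2 * Suc M) = S (2*M) + (1 / (2 * real M + 2) - ((\<Sum>i<k. ln (pochhammer (b (i+1)) (Suc M)) - ln (pochhammer (b i) (Suc M))) -
       (\<Sum>i<k. ln (pochhammer (b (i+1)) M) - ln (pochhammer (b i) M))) / real k)" .
    have hs: "harm (Suc M) = harm M + 2 * (1 / (2 * real M + 2) :: real)"
      using harm_Suc[of M, where ?'a=real] by (simp add: field_simps)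
    have ar: "\<And>(s::real) h p1 p0 kk a. s = h / 2 - p0 / kk \<Longrightarrow> s + (a - (p1 - p0) / kk) = (h + 2 * a) / 2 - p1 / kk"
      by (simp add: diff_divide_distrib add_divide_distrib)
    show ?case unfolding c hs by (rule ar[OF Suc.IH])
  qed

  have key2: "S (2*(N+1)) = (harm (N+1) - ln (real N)) / 2 + (ln (Gamma_series (b k) N) - ln (Gamma_series (b 0) N)) / real k"
    if N: "N \<ge> 1" for N
  proof -
    have "(\<Sum>i<k. ln (pochhammer (b (i+1)) (N+1)) - ln (pochhammer (b i) (N+1)))
       = (\<Sum>i<k. ln (real N) / 2 - (ln (Gamma_series (b (i+1)) N) - ln (Gamma_series (b i) N)))"
    proof (rule sum.cong)
      fix i assume "i \<in> {..<k}"
      show "ln (pochhammer (b (i+1)) (N+1)) - ln (pochhammer (b i) (N+1))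
         = ln (real N) / 2 - (ln (Gamma_series (b (i+1)) N) - ln (Gamma_series (b i) N))"
        using ln_poch_GS[OF bpos[of i] N] ln_poch_GS[OF bpos[of "i+1"] N]
        by (simp add: b_def field_simps)
    qed simp
    also have "\<dots> = real k * (ln (real N) / 2) - (ln (Gamma_series (b k) N) - ln (Gamma_series (b 0) N))"
      using sum_lessThan_telescope[of "\<lambda>i. ln (Gamma_series (b i) N)" k]
      by (simp add: sum_subtractf)
    finally show ?thesis using key[of "N+1"] kpos
      by (simp add: field_simps)
  qed
  define L where "L = euler_mascheroni / 2 + (1 / real k) * ln (Gamma ((x + real k) / 2) / Gamma (x / 2))"
  have lim1: "(\<lambda>N. (harm (N+1) - ln (real N)) / 2 + (ln (Gamma_series (b k) N) - ln (Gamma_series (b 0) N)) / real k) \<longlonglongrightarrow>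
      (euler_mascheroni + 0) / 2 + (ln (Gamma (b k)) - ln (Gamma (b 0))) / real k"
  proof -
    have h: "(\<lambda>N. harm (N+1) - ln (real (N+1))) \<longlonglongrightarrow> euler_mascheroni"
      using LIMSEQ_Suc[OF euler_mascheroni_LIMSEQ] by simp
    have l: "(\<lambda>N. ln (real N + 1) - ln (real N)) \<longlonglongrightarrow> 0" using ln_shift_lim[of 1] by simp
    have hl: "(\<lambda>N. harm (N+1) - ln (real N)) \<longlonglongrightarrow> euler_mascheroni + 0"
      using tendsto_add[OF h l] by (simp add: add.commute)
    show ?thesis
      by (intro tendsto_intros hl Gamma_series_LIMSEQ)
        (use Gamma_real_pos[OF bpos[of k]] Gamma_real_pos[OF bpos[of 0]] assms in auto)
  qed
  have g1: "Gamma (x/2) > 0" "Gamma ((x + real k)/2) > 0" using assms by (intro Gamma_real_pos; simp)+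
  have Leq: "(euler_mascheroni + 0) / 2 + (ln (Gamma (b k)) - ln (Gamma (b 0))) / real k = L"
    using g1 unfolding L_def b_def by (simp add: ln_div add.commute less_imp_neq[symmetric])
  have even1: "(\<lambda>N. S (2*(N+1))) \<longlonglongrightarrow> L"
  proof (rule Lim_transform_eventually[OF lim1[unfolded Leq]])
    show "eventually (\<lambda>N. (harm (N+1) - ln (real N)) / 2 + (ln (Gamma_series (b k) N) - ln (Gamma_series (b 0) N)) / real k = S (2*(N+1))) sequentially"
      unfolding eventually_sequentially using key2 by (intro exI[of _ 1] allI impI) simp
  qed
  have even: "(\<lambda>N. S (2*N)) \<longlonglongrightarrow> L"
    using LIMSEQ_imp_Suc[of "\<lambda>N. S (2*N)"] even1 by simp
  have Alim: "A \<longlonglongrightarrow> 0"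
  proof -
    have e: "A = (\<lambda>n. (harm n - ln (real n) - euler_mascheroni) - (\<Sum>i<k. ln (real n + (x - 1 + real i)) - ln (real n)) / real k)"
    proof
      fix n
      have "(\<Sum>i<k. ln (real n + (x - 1 + real i)) - ln (real n)) = (\<Sum>i<k. ln (real n + x - 1 + real i)) - real k * ln (real n)"
        by (simp add: sum_subtractf algebra_simps)
      then show "A n = (harm n - ln (real n) - euler_mascheroni) - (\<Sum>i<k. ln (real n + (x - 1 + real i)) - ln (real n)) / real k"
        unfolding A_def using kpos by (simp add: field_simps)
    qed
    have "(\<lambda>n. (harm n - ln (real n) - euler_mascheroni) - (\<Sum>i<k. ln (real n + (x - 1 + real i)) - ln (real n)) / real k)
      \<longlonglongrightarrow> (euler_mascheroni - euler_mascheroni) - (\<Sum>i<k. 0) / real k"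
      by (intro tendsto_intros euler_mascheroni_LIMSEQ ln_shift_lim) (use kpos in simp)
    then show ?thesis unfolding e by simp
  qed
  have fodd: "(\<lambda>N. f (2*N+1)) \<longlonglongrightarrow> 0"
  proof -
    have sm: "strict_mono (\<lambda>N::nat. 2*N+2)" by (simp add: strict_mono_def)
    have "(\<lambda>N. A (2*N+2)) \<longlonglongrightarrow> 0" using LIMSEQ_subseq_LIMSEQ[OF Alim sm] by (simp add: o_def)
    then show ?thesis by (simp add: f_def)
  qed
  have odd: "(\<lambda>N. S (2*N+1)) \<longlonglongrightarrow> L"
  proof -
    have "(\<lambda>N. S (2*(N+1)) - f (2*N+1)) \<longlonglongrightarrow> L - 0" by (intro tendsto_intros even1 fodd)
    moreover have "S (2*(N+1)) - f (2*N+1) = S (2*N+1)" for N by (simp add: S_def)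
    ultimately show ?thesis by simp
  qed
  have "S \<longlonglongrightarrow> L" by (rule my_limseq_even_odd[OF even odd])
  then show ?thesis unfolding feq sums_def S_def L_def .
qed

end
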